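(* Let $\mathcal{S}=\{s_1,\dots,s_N\}$ be a finite state space, $\mathcal{A}$ a finite action space, $\gamma\in(0,1)$, and consider the real MDP $\langle\mathcal{S},\mathcal{A},\mathbb{P},R,\gamma\rangle$ and the DT MDP $\langle\mathcal{S},\mathcal{A},\mathbb{P}',R',\gamma\rangle$. Then for every deterministic policy $\pi:\mathcal{S}\to\mathcal{A}$, $$\|V^*_{\mathrm{real}}-V^\pi_{\mathrm{real}}\|\le\frac{2}{1-\gamma}\max_i\bar d(s_i,s_i)+\frac{1+\gamma}{1-\gamma}\|V^*_{\mathrm{DT}}-V^\pi_{\mathrm{DT}}\|.$$
   Context: $\mathbb{P}(\cdot|s,a),\mathbb{P}'(\cdot|s,a)$ are probability distributions on $\mathcal{S}$; $R,R':\mathcal{S}\times\mathcal{A}\to\mathbb{R}$. $V^\pi_{\mathrm{real}}$ is the unique solution of $V(s)=R(s,\pi(s))+\gamma\sum_{\tilde s}\mathbb{P}(\tilde s|s,\pi(s))V(\tilde s)$, $V^*_{\mathrm{real}}$ the unique solution of $V(s)=\max_a\{R(s,a)+\gamma\sum_{\tilde s}\mathbb{P}(\tilde s|s,a)V(\tilde s)\}$; $V^\pi_{\mathrm{DT}},V^*_{\mathrm{DT}}$ analogously with $\mathbb{P}',R'$. $\|V^*_{\mathrm{real}}-V^\pi_{\mathrm{real}}\|=\max_i\{V^*_{\mathrm{real}}(s_i)-V^\pi_{\mathrm{real}}(s_i)\}$, similarly for DT. For distributions $P,Q$ on $\mathcal{S}$ and a cost $d:\mathcal{S}\times\mathcal{S}\to[0,\infty)$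 (not required to vanish on the diagonal; first argument a real-MDP state, second a DT-MDP state), $W_1(P,Q;d)=\min_\Lambda\sum_{i,j}\lambda_{i,j}d(s_i,s_j)$ over nonnegative $N\times N$ matrices with row sums $P(s_i)$ and column sums $Q(s_j)$. Define $d_0\equiv0$, $d_n(s_i,s_j)=\max_a\{|R(s_i,a)-R'(s_j,a)|+\gamma W_1(\mathbb{P}(\cdot|s_i,a),\mathbb{P}'(\cdot|s_j,a);d_{n-1})\}$; the DT bisimulation metric $\bar d$ is the pointwise limit of the nondecreasing sequence $(d_n)$, and it satisfies $\bar d(s_i,s_j)=\max_a\{|R(s_i,a)-R'(s_j,a)|+\gamma W_1(\mathbb{P}(\cdot|s_i,a),\mathbb{P}'(\cdot|s_j,a);\bar d)\}$. *)

theory Defs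
  imports "HOL-Analysis.Analysis"
begin

text \<open>A transition kernel is P :: 's \<Rightarrow> 'a \<Rightarrow> 's \<Rightarrow> real, P s a s' = P(s' | s, a).\<close>

definition stochastic :: "('s::finite \<Rightarrow> 'a \<Rightarrow> 's \<Rightarrow> real) \<Rightarrow> bool" where
  "stochastic P \<longleftrightarrow> (\<forall>s a s'. P s a s' \<ge> 0) \<and> (\<forall>s a. (\<Sum>s'\<in>UNIV. P s a s') = 1)"

definition V_pi :: "('s::finite \<Rightarrow> 'a \<Rightarrow> 's \<Rightarrow> real) \<Rightarrow> ('s \<Rightarrow> 'a \<Rightarrow> real) \<Rightarrow> real
    \<Rightarrow> ('s \<Rightarrow> 'a) \<Rightarrow> 's \<Rightarrow> real" where
  "V_pi P R \<gamma> \<pi> = (THE V. \<forall>s. V s = R s (\<pi> s) + \<gamma> * (\<Sum>t\<in>UNIV. P s (\<pi> s) t * V t))"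

definition V_star :: "('s::finite \<Rightarrow> 'a::finite \<Rightarrow> 's \<Rightarrow> real) \<Rightarrow> ('s \<Rightarrow> 'a \<Rightarrow> real) \<Rightarrow> real
    \<Rightarrow> 's \<Rightarrow> real" where
  "V_star P R \<gamma> = (THE V. \<forall>s. V s = Max (range (\<lambda>a. R s a + \<gamma> * (\<Sum>t\<in>UNIV. P s a t * V t))))"

text \<open>The gap norm ||V1 - V2|| = max_i (V1 s_i - V2 s_i).\<close>
definition gap :: "('s::finite \<Rightarrow> real) \<Rightarrow> ('s \<Rightarrow> real) \<Rightarrow> real" where
  "gap V1 V2 = Max (range (\<lambda>s. V1 s - V2 s))"

text \<open>Wasserstein-1 distance with cost d: minimum over couplings (minimum is attained).\<close>
definition W1 :: "('s::finite \<Rightarrow> real) \<Rightarrow> ('s \<Rightarrow> real) \<Rightarrow> ('s \<Rightarrow> 's \<Rightarrow> real) \<Rightarrow> real" where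
  "W1 p q d = Inf {(\<Sum>i\<in>UNIV. \<Sum>j\<in>UNIV. L i j * d i j) | L.
      (\<forall>i j. L i j \<ge> 0) \<and> (\<forall>i. (\<Sum>j\<in>UNIV. L i j) = p i) \<and> (\<forall>j. (\<Sum>i\<in>UNIV. L i j) = q j)}"

fun d_iter :: "('s::finite \<Rightarrow> 'a::finite \<Rightarrow> 's \<Rightarrow> real) \<Rightarrow> ('s \<Rightarrow> 'a \<Rightarrow> real)
    \<Rightarrow> ('s \<Rightarrow> 'a \<Rightarrow> 's \<Rightarrow> real) \<Rightarrow> ('s \<Rightarrow> 'a \<Rightarrow> real) \<Rightarrow> real \<Rightarrow> nat \<Rightarrow> 's \<Rightarrow> 's \<Rightarrow> real" where
  "d_iter P R P' R' \<gamma> 0 = (\<lambda>_ _. 0)"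
| "d_iter P R P' R' \<gamma> (Suc n) = (\<lambda>si sj. Max (range (\<lambda>a.
      \<bar>R si a - R' sj a\<bar> + \<gamma> * W1 (P si a) (P' sj a) (d_iter P R P' R' \<gamma> n))))"

definition d_bar :: "('s::finite \<Rightarrow> 'a::finite \<Rightarrow> 's \<Rightarrow> real) \<Rightarrow> ('s \<Rightarrow> 'a \<Rightarrow> real)
    \<Rightarrow> ('s \<Rightarrow> 'a \<Rightarrow> 's \<Rightarrow> real) \<Rightarrow> ('s \<Rightarrow> 'a \<Rightarrow> real) \<Rightarrow> real \<Rightarrow> 's \<Rightarrow> 's \<Rightarrow> real" where
  "d_bar P R P' R' \<gamma> si sj = lim (\<lambda>n. d_iter P R P' R' \<gamma> n si sj)"

end

theory Submission
  imports Defs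
begin

lemma max_range_diff:
  fixes f h :: "'a::finite \<Rightarrow> real"
  assumes "\<And>a. \<bar>f a - h a\<bar> \<le> c"
  shows "\<bar>Max (range f) - Max (range h)\<bar> \<le> c"
proof -
  have "Max (range f) \<in> range f" by (rule Max_in) auto
  then obtain a where a: "Max (range f) = f a" by blast
  have "Max (range h) \<in> range h" by (rule Max_in) auto
  then obtain b where b: "Max (range h) = h b" by blast
  have "f b \<le> Max (range f)" "h a \<le> Max (range h)" by simp_all
  then have "f b \<le> f a" "h a \<le> h b" using a b by simp_all
  then show ?thesis using assms[of a] assms[of b] a b by (simp add: abs_le_iff)
qed

lemma max_range_mono:
  fixes f h :: "'a::finite \<Rightarrow> real"
  assumes "\<And>a. f a \<le> h a"
  shows "Max (range f) \<le> Max (range h)"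
proof -
  have "Max (range f) \<in> range f" by (rule Max_in) auto
  then obtain a where a: "Max (range f) = f a" by blast
  have "h a \<le> Max (range h)" by (simp add: Max_ge)
  then show ?thesis using a assms[of a] by linarith
qed

lemma stoch_sum_bound:
  assumes "stochastic P" "\<And>t. \<bar>V t - W t\<bar> \<le> c"
  shows "\<bar>(\<Sum>t\<in>UNIV. P s a t * V t) - (\<Sum>t\<in>UNIV. P s a t * W t)\<bar> \<le> c"
proof -
  have "\<bar>(\<Sum>t\<in>UNIV. P s a t * V t) - (\<Sum>t\<in>UNIV. P s a t * W t)\<bar>
      = \<bar>\<Sum>t\<in>UNIV. P s a t * (V t - W t)\<bar>"
    by (simp add: sum_subtractf right_diff_distrib)
  also have "\<dots> \<le> (\<Sum>t\<in>UNIV. \<bar>P s a t * (V t - W t)\<bar>)" by (rule sum_abs)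
  also have "\<dots> \<le> (\<Sum>t\<in>UNIV. P s a t * c)"
    apply (rule sum_mono) using assms by (simp add: stochastic_def abs_mult mult_left_mono)
  also have "\<dots> = c" using assms(1) by (simp add: stochastic_def sum_distrib_right[symmetric])
  finally show ?thesis .
qed

lemma stoch_lower:
  assumes "stochastic P" "\<And>t. c \<le> x t"
  shows "c \<le> (\<Sum>t\<in>UNIV. P s a t * x t)"
proof -
  have "c = (\<Sum>t\<in>UNIV. P s a t * c)" using assms(1) by (simp add: stochastic_def sum_distrib_right[symmetric])
  also have "\<dots> \<le> (\<Sum>t\<in>UNIV. P s a t * x t)"
    apply (rule sum_mono) using assms by (simp add: stochastic_def mult_left_mono)
  finally show ?thesis .
qed

lemma contraction_fix:
  fixes T :: "('s::finite \<Rightarrow> real) \<Rightarrow> 's \<Rightarrow> real"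
  assumes g: "0 \<le> g" "g < 1"
    and con: "\<And>V W c s. (\<And>t. \<bar>V t - W t\<bar> \<le> c) \<Longrightarrow> \<bar>T V s - T W s\<bar> \<le> g * c"
  shows "\<exists>!V. \<forall>s. V s = T V s"
proof -
  have uniq: "V = L" if "\<forall>s. V s = T V s" "\<forall>s. L s = T L s" for V L
  proof -
  note V = that(1) and Lfix = that(2)
  define m where "m = Max (range (\<lambda>t. \<bar>V t - L t\<bar>))"
  have le: "\<bar>V t - L t\<bar> \<le> m" for t by (simp add: m_def)
  have "\<bar>V s - L s\<bar> \<le> g * m" for s
  proof -
    have "\<bar>V s - L s\<bar> = \<bar>T V s - T L s\<bar>" using V Lfix by metis
    also have "\<dots> \<le> g * m" by (rule con) (rule le)
    finally show ?thesis .
  qed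
  then have "m \<le> g * m" unfolding m_def by (subst Max_le_iff) auto
  moreover have "0 \<le> m" using le[of undefined] by linarith
  ultimately have "m \<le> 0" using g by (metis mult_le_cancel_right1 not_le order_le_less_trans)
  then have "\<bar>V t - L t\<bar> \<le> 0" for t using le[of t] by linarith
  then show "V = L" by (intro ext) simp
  qed
  define V where "V n = (T ^^ n) (\<lambda>_. 0)" for n
  define M where "M = Max (range (\<lambda>t. \<bar>T (\<lambda>_. 0) t\<bar>))"
  have step: "\<bar>V (Suc k) s - V k s\<bar> \<le> g^k * M" for k s
  proof (induction k arbitrary: s)
    case 0
    then show ?case by (simp add: V_def M_def Max_ge)
  next
    case (Suc k)
    have "\<bar>V (Suc (Suc k)) s - V (Suc k) s\<bar> = \<bar>T (V (Suc k)) s - T (V k) s\<bar>" by (simp add: V_def)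
    also have "\<dots> \<le> g * (g^k * M)" by (rule con) (rule Suc.IH)
    finally show ?case by simp
  qed
  define L where "L s = suminf (\<lambda>k. V (Suc k) s - V k s)" for s
  have sm: "summable (\<lambda>k. V (Suc k) s - V k s)" for s
  proof (rule summable_comparison_test')
    show "summable (\<lambda>k. g^k * M)" using g by (intro summable_mult2 summable_geometric) simp
    show "norm (V (Suc k) s - V k s) \<le> g^k * M" for k using step by simp
  qed
  have conv: "(\<lambda>n. V n s) \<longlonglongrightarrow> L s" for s
  proof -
    have "(\<lambda>n. \<Sum>k<n. V (Suc k) s - V k s) \<longlonglongrightarrow> L s"
      unfolding L_def by (rule summable_LIMSEQ[OF sm])
    moreover have "(\<Sum>k<n. V (Suc k) s - V k s) = V n s" for n
      using sum_lessThan_telescope[of "\<lambda>k. V k s" n] by (simp add: V_def)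
    ultimately show ?thesis by simp
  qed
  have Lfix: "\<forall>s. L s = T L s"
  proof
    fix s
    have a: "(\<lambda>n. T (V n) s) \<longlonglongrightarrow> L s"
      using LIMSEQ_Suc[OF conv[of s]] by (simp add: V_def)
    have z: "(\<lambda>n. g * (\<Sum>t\<in>UNIV. \<bar>V n t - L t\<bar>)) \<longlonglongrightarrow> 0"
    proof -
      have "(\<lambda>n. (\<Sum>t\<in>UNIV. \<bar>V n t - L t\<bar>)) \<longlonglongrightarrow> 0"
        apply (rule tendsto_null_sum)
        apply (rule tendsto_rabs_zero)
        using conv LIM_zero by blast
      then show ?thesis by (rule tendsto_mult_right_zero)
    qed
    have "(\<lambda>n. T (V n) s - T L s) \<longlonglongrightarrow> 0"
    proof (rule Lim_null_comparison[OF _ z])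
      show "\<forall>\<^sub>F n in sequentially. norm (T (V n) s - T L s) \<le> g * (\<Sum>t\<in>UNIV. \<bar>V n t - L t\<bar>)"
        apply (rule always_eventually, rule allI)
        apply simp
        apply (rule con)
        by (rule member_le_sum) auto
    qed
    then have "(\<lambda>n. T (V n) s) \<longlonglongrightarrow> T L s" by (rule LIM_zero_cancel)
    with a show "L s = T L s" by (rule LIMSEQ_unique)
  qed
  show ?thesis using Lfix uniq by blast
qed

definition coup :: "('s::finite \<Rightarrow> real) \<Rightarrow> ('s \<Rightarrow> real) \<Rightarrow> ('s \<Rightarrow> 's \<Rightarrow> real) set" where
  "coup p q = {L. (\<forall>i j. L i j \<ge> 0) \<and> (\<forall>i. (\<Sum>j\<in>UNIV. L i j) = p i) \<and> (\<forall>j. (\<Sum>i\<in>UNIV. L i j) = q j)}"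

definition pd :: "('s::finite \<Rightarrow> real) \<Rightarrow> bool" where
  "pd p \<longleftrightarrow> (\<forall>i. p i \<ge> 0) \<and> sum p UNIV = 1"

lemma stoch_pd: "stochastic P \<Longrightarrow> pd (P s a)"
  by (simp add: stochastic_def pd_def)

lemma W1_alt: "W1 p q d = Inf ((\<lambda>L. \<Sum>i\<in>UNIV. \<Sum>j\<in>UNIV. L i j * d i j) ` coup p q)"
  unfolding W1_def coup_def by (rule arg_cong[where f=Inf]) auto

lemma coup_ne: "pd p \<Longrightarrow> pd q \<Longrightarrow> (\<lambda>i j. p i * q j) \<in> coup p q"
  by (simp add: pd_def coup_def sum_distrib_left[symmetric] sum_distrib_right[symmetric])

lemma W1_ge:
  assumes "pd p" "pd q" "\<And>i j. u i + v j \<le> d i j"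
  shows "(\<Sum>i\<in>UNIV. p i * u i) + (\<Sum>j\<in>UNIV. q j * v j) \<le> W1 p q d"
  unfolding W1_alt
proof (rule cInf_greatest)
  show "(\<lambda>L. \<Sum>i\<in>UNIV. \<Sum>j\<in>UNIV. L i j * d i j) ` coup p q \<noteq> {}"
    using coup_ne[OF assms(1,2)] by blast
  fix x assume "x \<in> (\<lambda>L. \<Sum>i\<in>UNIV. \<Sum>j\<in>UNIV. L i j * d i j) ` coup p q"
  then obtain L where L: "L \<in> coup p q" and x: "x = (\<Sum>i\<in>UNIV. \<Sum>j\<in>UNIV. L i j * d i j)" by blast
  have 1: "(\<Sum>i\<in>UNIV. p i * u i) = (\<Sum>i\<in>UNIV. \<Sum>j\<in>UNIV. L i j * u i)"
    using L by (simp add: coup_def sum_distrib_right[symmetric])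
  have "(\<Sum>j\<in>UNIV. q j * v j) = (\<Sum>j\<in>UNIV. \<Sum>i\<in>UNIV. L i j * v j)"
    using L by (simp add: coup_def sum_distrib_right[symmetric])
  also have "\<dots> = (\<Sum>i\<in>UNIV. \<Sum>j\<in>UNIV. L i j * v j)" by (rule sum.swap)
  finally have 2: "(\<Sum>j\<in>UNIV. q j * v j) = (\<Sum>i\<in>UNIV. \<Sum>j\<in>UNIV. L i j * v j)" .
  have "(\<Sum>i\<in>UNIV. p i * u i) + (\<Sum>j\<in>UNIV. q j * v j) = (\<Sum>i\<in>UNIV. \<Sum>j\<in>UNIV. L i j * (u i + v j))"
    unfolding 1 2 by (simp add: sum.distrib[symmetric] distrib_left)
  also have "\<dots> \<le> x" unfolding x
    apply (rule sum_mono, rule sum_mono)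
    using L assms(3) by (simp add: coup_def mult_left_mono)
  finally show "(\<Sum>i\<in>UNIV. p i * u i) + (\<Sum>j\<in>UNIV. q j * v j) \<le> x" .
qed

lemma W1_nonneg: "pd p \<Longrightarrow> pd q \<Longrightarrow> (\<And>i j. 0 \<le> d i j) \<Longrightarrow> 0 \<le> W1 p q d"
  using W1_ge[of p q "\<lambda>_. 0" "\<lambda>_. 0" d] by simp

lemma W1_bdd: "(\<And>i j. 0 \<le> d i j) \<Longrightarrow> bdd_below ((\<lambda>L. \<Sum>i\<in>UNIV. \<Sum>j\<in>UNIV. L i j * d i j) ` coup p q)"
  unfolding bdd_below_def
  by (rule exI[of _ 0]) (auto simp: coup_def intro!: sum_nonneg)

lemma W1_mono:
  assumes "pd p" "pd q" "\<And>i j. 0 \<le> d i j" "\<And>i j. d i j \<le> d' i j"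
  shows "W1 p q d \<le> W1 p q d'"
  unfolding W1_alt
proof (rule cInf_mono)
  show "(\<lambda>L. \<Sum>i\<in>UNIV. \<Sum>j\<in>UNIV. L i j * d' i j) ` coup p q \<noteq> {}"
    using coup_ne[OF assms(1,2)] by blast
  show "bdd_below ((\<lambda>L. \<Sum>i\<in>UNIV. \<Sum>j\<in>UNIV. L i j * d i j) ` coup p q)"
    by (rule W1_bdd) (rule assms(3))
  fix b assume "b \<in> (\<lambda>L. \<Sum>i\<in>UNIV. \<Sum>j\<in>UNIV. L i j * d' i j) ` coup p q"
  then obtain L where L: "L \<in> coup p q" and b: "b = (\<Sum>i\<in>UNIV. \<Sum>j\<in>UNIV. L i j * d' i j)" by blast
  have "(\<Sum>i\<in>UNIV. \<Sum>j\<in>UNIV. L i j * d i j) \<le> b" unfolding b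
    apply (rule sum_mono, rule sum_mono)
    using L assms(4) by (simp add: coup_def mult_left_mono)
  then show "\<exists>a\<in>(\<lambda>L. \<Sum>i\<in>UNIV. \<Sum>j\<in>UNIV. L i j * d i j) ` coup p q. a \<le> b" using L by blast
qed

lemma W1_le:
  assumes "pd p" "pd q" "\<And>i j. 0 \<le> d i j" "\<And>i j. d i j \<le> K"
  shows "W1 p q d \<le> K"
  unfolding W1_alt
proof (rule cInf_lower2)
  show "(\<Sum>i\<in>UNIV. \<Sum>j\<in>UNIV. p i * q j * d i j) \<in> (\<lambda>L. \<Sum>i\<in>UNIV. \<Sum>j\<in>UNIV. L i j * d i j) ` coup p q"
    by (rule image_eqI[OF _ coup_ne[OF assms(1,2)]]) simp
  show "bdd_below ((\<lambda>L. \<Sum>i\<in>UNIV. \<Sum>j\<in>UNIV. L i j * d i j) ` coup p q)"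
    by (rule W1_bdd) (rule assms(3))
  have "(\<Sum>i\<in>UNIV. \<Sum>j\<in>UNIV. p i * q j * d i j) \<le> (\<Sum>i\<in>UNIV. \<Sum>j\<in>UNIV. p i * q j * K)"
    apply (rule sum_mono, rule sum_mono)
    using assms by (simp add: pd_def mult_left_mono)
  also have "\<dots> = K" using assms(1,2)
    by (simp add: pd_def sum_distrib_left[symmetric] sum_distrib_right[symmetric] mult.assoc)
  finally show "(\<Sum>i\<in>UNIV. \<Sum>j\<in>UNIV. p i * q j * d i j) \<le> K" .
qed

lemma W1_diff:
  assumes "pd p" "pd q" "\<And>i j. \<bar>f i - g j\<bar> \<le> d i j + c"
  shows "\<bar>(\<Sum>i\<in>UNIV. p i * f i) - (\<Sum>j\<in>UNIV. q j * g j)\<bar> \<le> W1 p q d + c"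
proof -
  have sp: "(\<Sum>i\<in>UNIV. p i * c) = c" using assms(1) by (simp add: pd_def sum_distrib_right[symmetric])
  have a: "(\<Sum>i\<in>UNIV. p i * (f i - c)) + (\<Sum>j\<in>UNIV. q j * (- g j)) \<le> W1 p q d"
    apply (rule W1_ge[OF assms(1,2)]) subgoal for i j using assms(3)[of i j] by (simp add: abs_le_iff) done
  have b: "(\<Sum>i\<in>UNIV. p i * (- f i - c)) + (\<Sum>j\<in>UNIV. q j * g j) \<le> W1 p q d"
    apply (rule W1_ge[OF assms(1,2)]) subgoal for i j using assms(3)[of i j] by (simp add: abs_le_iff) done
  have a': "(\<Sum>i\<in>UNIV. p i * (f i - c)) = (\<Sum>i\<in>UNIV. p i * f i) - c"
    using sp by (simp add: right_diff_distrib sum_subtractf)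
  have b': "(\<Sum>i\<in>UNIV. p i * (- f i - c)) = - (\<Sum>i\<in>UNIV. p i * f i) - c"
    using sp by (simp add: right_diff_distrib sum_subtractf sum_negf)
  show ?thesis using a b a' b' by (simp add: sum_negf abs_le_iff)
qed


lemma Vstar_eq:
  assumes "stochastic P" "0 \<le> \<gamma>" "\<gamma> < 1"
  shows "V_star P R \<gamma> s = Max (range (\<lambda>a. R s a + \<gamma> * (\<Sum>t\<in>UNIV. P s a t * V_star P R \<gamma> t)))"
proof -
  have "\<exists>!V. \<forall>s. V s = Max (range (\<lambda>a. R s a + \<gamma> * (\<Sum>t\<in>UNIV. P s a t * V t)))"
  proof (rule contraction_fix[OF assms(2,3)])
    fix V W :: "'a \<Rightarrow> real" and c s assume h: "\<And>t. \<bar>V t - W t\<bar> \<le> c"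
    show "\<bar>Max (range (\<lambda>a. R s a + \<gamma> * (\<Sum>t\<in>UNIV. P s a t * V t))) -
           Max (range (\<lambda>a. R s a + \<gamma> * (\<Sum>t\<in>UNIV. P s a t * W t)))\<bar> \<le> \<gamma> * c"
    proof (rule max_range_diff)
      fix a
      have "\<bar>(R s a + \<gamma> * (\<Sum>t\<in>UNIV. P s a t * V t)) - (R s a + \<gamma> * (\<Sum>t\<in>UNIV. P s a t * W t))\<bar>
          = \<gamma> * \<bar>(\<Sum>t\<in>UNIV. P s a t * V t) - (\<Sum>t\<in>UNIV. P s a t * W t)\<bar>"
        using assms(2) by (simp add: abs_mult right_diff_distrib[symmetric])
      also have "\<dots> \<le> \<gamma> * c" by (rule mult_left_mono[OF stoch_sum_bound[OF assms(1) h] assms(2)])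
      finally show "\<bar>(R s a + \<gamma> * (\<Sum>t\<in>UNIV. P s a t * V t)) - (R s a + \<gamma> * (\<Sum>t\<in>UNIV. P s a t * W t))\<bar> \<le> \<gamma> * c" .
    qed
  qed
  then have "\<forall>s. V_star P R \<gamma> s = Max (range (\<lambda>a. R s a + \<gamma> * (\<Sum>t\<in>UNIV. P s a t * V_star P R \<gamma> t)))"
    unfolding V_star_def by (rule theI')
  then show ?thesis by blast
qed

lemma Vpi_eq:
  assumes "stochastic P" "0 \<le> \<gamma>" "\<gamma> < 1"
  shows "V_pi P R \<gamma> \<pi> s = R s (\<pi> s) + \<gamma> * (\<Sum>t\<in>UNIV. P s (\<pi> s) t * V_pi P R \<gamma> \<pi> t)"
proof -
  have "\<exists>!V. \<forall>s. V s = R s (\<pi> s) + \<gamma> * (\<Sum>t\<in>UNIV. P s (\<pi> s) t * V t)"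
  proof (rule contraction_fix[OF assms(2,3)])
    fix V W :: "'a \<Rightarrow> real" and c s assume h: "\<And>t. \<bar>V t - W t\<bar> \<le> c"
    have "\<bar>(R s (\<pi> s) + \<gamma> * (\<Sum>t\<in>UNIV. P s (\<pi> s) t * V t)) - (R s (\<pi> s) + \<gamma> * (\<Sum>t\<in>UNIV. P s (\<pi> s) t * W t))\<bar>
        = \<gamma> * \<bar>(\<Sum>t\<in>UNIV. P s (\<pi> s) t * V t) - (\<Sum>t\<in>UNIV. P s (\<pi> s) t * W t)\<bar>"
      using assms(2) by (simp add: abs_mult right_diff_distrib[symmetric])
    also have "\<dots> \<le> \<gamma> * c" by (rule mult_left_mono[OF stoch_sum_bound[OF assms(1) h] assms(2)])
    finally show "\<bar>(R s (\<pi> s) + \<gamma> * (\<Sum>t\<in>UNIV. P s (\<pi> s) t * V t)) - (R s (\<pi> s) + \<gamma> * (\<Sum>t\<in>UNIV. P s (\<pi> s) t * W t))\<bar> \<le> \<gamma> * c" .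
  qed
  then have "\<forall>s. V_pi P R \<gamma> \<pi> s = R s (\<pi> s) + \<gamma> * (\<Sum>t\<in>UNIV. P s (\<pi> s) t * V_pi P R \<gamma> \<pi> t)"
    unfolding V_pi_def by (rule theI')
  then show ?thesis by blast
qed

lemma d_iter_Suc:
  "d_iter P R P' R' \<gamma> (Suc n) i j = Max (range (\<lambda>a. \<bar>R i a - R' j a\<bar> + \<gamma> * W1 (P i a) (P' j a) (d_iter P R P' R' \<gamma> n)))"
  by simp

lemma d_iter_ge:
  "\<bar>R i a - R' j a\<bar> + \<gamma> * W1 (P i a) (P' j a) (d_iter P R P' R' \<gamma> n) \<le> d_iter P R P' R' \<gamma> (Suc n) i j"
  unfolding d_iter_Suc by (rule Max_ge) auto

lemma dd_nonneg:
  assumes "stochastic P" "stochastic P'" "0 \<le> \<gamma>"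
  shows "0 \<le> d_iter P R P' R' \<gamma> n i j"
proof (induction n arbitrary: i j)
  case 0
  show ?case by simp
next
  case (Suc n)
  have "0 \<le> \<bar>R i a - R' j a\<bar> + \<gamma> * W1 (P i a) (P' j a) (d_iter P R P' R' \<gamma> n)" for a
    using W1_nonneg[OF stoch_pd[OF assms(1)] stoch_pd[OF assms(2)] Suc.IH] assms(3) by simp
  then show ?case using d_iter_ge[of R i _ R' j \<gamma> P P' n] order_trans by blast
qed

lemma dd_mono:
  assumes "stochastic P" "stochastic P'" "0 \<le> \<gamma>"
  shows "d_iter P R P' R' \<gamma> n i j \<le> d_iter P R P' R' \<gamma> (Suc n) i j"
proof (induction n arbitrary: i j)
  case 0
  show ?case using dd_nonneg[OF assms, of R R' "Suc 0" i j] by simp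
next
  case (Suc n)
  have e1: "d_iter P R P' R' \<gamma> (Suc (Suc n)) i j = Max (range (\<lambda>a. \<bar>R i a - R' j a\<bar> + \<gamma> * W1 (P i a) (P' j a) (d_iter P R P' R' \<gamma> (Suc n))))"
    by (rule d_iter_Suc)
  have e2: "d_iter P R P' R' \<gamma> (Suc n) i j = Max (range (\<lambda>a. \<bar>R i a - R' j a\<bar> + \<gamma> * W1 (P i a) (P' j a) (d_iter P R P' R' \<gamma> n)))"
    by (rule d_iter_Suc)
  show ?case unfolding e1 e2
    apply (rule max_range_mono)
    apply (rule add_left_mono)
    apply (rule mult_left_mono[OF _ assms(3)])
    apply (rule W1_mono[OF stoch_pd[OF assms(1)] stoch_pd[OF assms(2)]])
     apply (rule dd_nonneg[OF assms])
    apply (rule Suc.IH)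
    done
qed

lemma dd_bound:
  assumes "stochastic P" "stochastic P'" "0 \<le> \<gamma>" "\<gamma> < 1"
  shows "d_iter P R P' R' \<gamma> n i j \<le> Max (range (\<lambda>x. \<bar>R (fst (fst x)) (snd x) - R' (snd (fst x)) (snd x)\<bar>)) / (1 - \<gamma>)"
proof -
  define Rm where "Rm = Max (range (\<lambda>x::('a \<times> 'a) \<times> 'b. \<bar>R (fst (fst x)) (snd x) - R' (snd (fst x)) (snd x)\<bar>))"
  have Rm: "\<bar>R i a - R' j a\<bar> \<le> Rm" for i j a
    unfolding Rm_def apply (rule Max_ge) apply simp apply (rule image_eqI[where x="((i,j),a)"]) by auto
  have Rm0: "0 \<le> Rm" using Rm[of undefined undefined undefined] by linarith
  have B0: "0 \<le> Rm / (1 - \<gamma>)" using Rm0 assms(4) by simp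
  have "d_iter P R P' R' \<gamma> n i j \<le> Rm / (1 - \<gamma>)"
  proof (induction n arbitrary: i j)
    case 0
    show ?case using B0 by simp
  next
    case (Suc n)
    have "\<bar>R i a - R' j a\<bar> + \<gamma> * W1 (P i a) (P' j a) (d_iter P R P' R' \<gamma> n) \<le> Rm / (1 - \<gamma>)" for a
    proof -
      have "W1 (P i a) (P' j a) (d_iter P R P' R' \<gamma> n) \<le> Rm / (1 - \<gamma>)"
        by (rule W1_le[OF stoch_pd[OF assms(1)] stoch_pd[OF assms(2)] dd_nonneg[OF assms(1-3)] Suc.IH])
      then have "\<bar>R i a - R' j a\<bar> + \<gamma> * W1 (P i a) (P' j a) (d_iter P R P' R' \<gamma> n) \<le> Rm + \<gamma> * (Rm / (1 - \<gamma>))"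
        using Rm[of i a j] assms(3) by (meson add_mono mult_left_mono)
      also have "\<dots> = Rm / (1 - \<gamma>)" using assms(4) by (simp add: field_simps)
      finally show ?thesis .
    qed
    then show ?case unfolding d_iter_Suc by (subst Max_le_iff) auto
  qed
  then show ?thesis unfolding Rm_def .
qed

lemma dd_le_dbar:
  assumes "stochastic P" "stochastic P'" "0 \<le> \<gamma>" "\<gamma> < 1"
  shows "d_iter P R P' R' \<gamma> n i j \<le> d_bar P R P' R' \<gamma> i j"
proof -
  have inc: "incseq (\<lambda>n. d_iter P R P' R' \<gamma> n i j)"
    by (rule incseq_SucI) (rule dd_mono[OF assms(1-3)])
  have bdd: "bdd_above (range (\<lambda>n. d_iter P R P' R' \<gamma> n i j))"
    by (rule bdd_aboveI2, rule dd_bound[OF assms])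
  have L: "(\<lambda>n. d_iter P R P' R' \<gamma> n i j) \<longlonglongrightarrow> (SUP n. d_iter P R P' R' \<gamma> n i j)"
    by (rule LIMSEQ_incseq_SUP[OF bdd inc])
  then have "d_bar P R P' R' \<gamma> i j = (SUP n. d_iter P R P' R' \<gamma> n i j)"
    unfolding d_bar_def by (rule limI)
  then show ?thesis using incseq_le[OF inc L] by simp
qed

lemma lim_le:
  fixes x y K \<gamma> :: real
  assumes "0 \<le> \<gamma>" "\<gamma> < 1" "\<And>n. x \<le> y + \<gamma>^n * K"
  shows "x \<le> y"
proof -
  have "(\<lambda>n. y + \<gamma>^n * K) \<longlonglongrightarrow> y + 0 * K"
    by (intro tendsto_intros LIMSEQ_power_zero) (use assms in simp)
  then have "(\<lambda>n. y + \<gamma>^n * K) \<longlonglongrightarrow> y" by simp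
  then show ?thesis by (rule LIMSEQ_le_const) (use assms(3) in blast)
qed


lemma bisim:
  assumes "stochastic P" "stochastic P'" "0 \<le> \<gamma>" "\<gamma> < 1"
  shows "\<bar>V_star P R \<gamma> s - V_star P' R' \<gamma> s\<bar> \<le> d_bar P R P' R' \<gamma> s s"
    and "\<bar>(R s a + \<gamma> * (\<Sum>t\<in>UNIV. P s a t * V_star P R \<gamma> t)) - (R' s a + \<gamma> * (\<Sum>t\<in>UNIV. P' s a t * V_star P' R' \<gamma> t))\<bar>
          \<le> d_bar P R P' R' \<gamma> s s"
proof -
  define Vr where "Vr = V_star P R \<gamma>"
  define Vd where "Vd = V_star P' R' \<gamma>"
  define K where "K = (\<Sum>i\<in>UNIV. \<bar>Vr i\<bar>) + (\<Sum>j\<in>UNIV. \<bar>Vd j\<bar>)"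
  have A: "\<bar>(R i a + \<gamma> * (\<Sum>t\<in>UNIV. P i a t * Vr t)) - (R' j a + \<gamma> * (\<Sum>t\<in>UNIV. P' j a t * Vd t))\<bar>
          \<le> d_iter P R P' R' \<gamma> (Suc n) i j + \<gamma>^(Suc n) * K"
    if H: "\<And>i j. \<bar>Vr i - Vd j\<bar> \<le> d_iter P R P' R' \<gamma> n i j + \<gamma>^n * K" for n i j a
  proof -
    define X where "X = (\<Sum>t\<in>UNIV. P i a t * Vr t)"
    define Y where "Y = (\<Sum>t\<in>UNIV. P' j a t * Vd t)"
    define W where "W = W1 (P i a) (P' j a) (d_iter P R P' R' \<gamma> n)"
    have XY: "\<bar>X - Y\<bar> \<le> W + \<gamma>^n * K"
      unfolding X_def Y_def W_def
      by (rule W1_diff[OF stoch_pd[OF assms(1)] stoch_pd[OF assms(2)] H])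
    have g: "\<bar>\<gamma> * X - \<gamma> * Y\<bar> = \<gamma> * \<bar>X - Y\<bar>"
      using assms(3) by (simp add: abs_mult right_diff_distrib[symmetric])
    have "\<gamma> * \<bar>X - Y\<bar> \<le> \<gamma> * (W + \<gamma>^n * K)" by (rule mult_left_mono[OF XY assms(3)])
    moreover have "\<bar>R i a - R' j a\<bar> + \<gamma> * W \<le> d_iter P R P' R' \<gamma> (Suc n) i j"
      unfolding W_def by (rule d_iter_ge)
    moreover have "\<bar>(R i a + \<gamma> * X) - (R' j a + \<gamma> * Y)\<bar> \<le> \<bar>R i a - R' j a\<bar> + \<bar>\<gamma> * X - \<gamma> * Y\<bar>"
      by simp
    ultimately have "\<bar>(R i a + \<gamma> * X) - (R' j a + \<gamma> * Y)\<bar> \<le> d_iter P R P' R' \<gamma> (Suc n) i j + \<gamma>^(Suc n) * K"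
      using g by (simp add: distrib_left)
    then show ?thesis unfolding X_def Y_def .
  qed
  have B: "\<bar>Vr i - Vd j\<bar> \<le> d_iter P R P' R' \<gamma> n i j + \<gamma>^n * K" for n i j
  proof (induction n arbitrary: i j)
    case 0
    have "\<bar>Vr i\<bar> \<le> (\<Sum>i\<in>UNIV. \<bar>Vr i\<bar>)" "\<bar>Vd j\<bar> \<le> (\<Sum>j\<in>UNIV. \<bar>Vd j\<bar>)"
      by (rule member_le_sum; simp)+
    then show ?case unfolding K_def by simp
  next
    case (Suc n)
    have "\<bar>Vr i - Vd j\<bar> = \<bar>Max (range (\<lambda>a. R i a + \<gamma> * (\<Sum>t\<in>UNIV. P i a t * Vr t))) - Max (range (\<lambda>a. R' j a + \<gamma> * (\<Sum>t\<in>UNIV. P' j a t * Vd t)))\<bar>"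
      unfolding Vr_def Vd_def using Vstar_eq[OF assms(1,3,4)] Vstar_eq[OF assms(2,3,4)] by metis
    also have "\<dots> \<le> d_iter P R P' R' \<gamma> (Suc n) i j + \<gamma>^(Suc n) * K"
      by (rule max_range_diff) (rule A[OF Suc.IH])
    finally show ?case .
  qed
  show "\<bar>V_star P R \<gamma> s - V_star P' R' \<gamma> s\<bar> \<le> d_bar P R P' R' \<gamma> s s"
  proof (rule lim_le[OF assms(3,4)])
    fix n
    show "\<bar>V_star P R \<gamma> s - V_star P' R' \<gamma> s\<bar> \<le> d_bar P R P' R' \<gamma> s s + \<gamma>^n * K"
      using B[of s s n] dd_le_dbar[OF assms, of R R' n s s] unfolding Vr_def Vd_def by linarith
  qed
  show "\<bar>(R s a + \<gamma> * (\<Sum>t\<in>UNIV. P s a t * V_star P R \<gamma> t)) - (R' s a + \<gamma> * (\<Sum>t\<in>UNIV. P' s a t * V_star P' R' \<gamma> t))\<bar>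
          \<le> d_bar P R P' R' \<gamma> s s"
  proof (rule lim_le[OF assms(3,4)])
    fix n
    have "\<gamma>^(Suc n) * K = \<gamma>^n * (\<gamma> * K)" by simp
    then show "\<bar>(R s a + \<gamma> * (\<Sum>t\<in>UNIV. P s a t * V_star P R \<gamma> t)) - (R' s a + \<gamma> * (\<Sum>t\<in>UNIV. P' s a t * V_star P' R' \<gamma> t))\<bar>
          \<le> d_bar P R P' R' \<gamma> s s + \<gamma>^n * (\<gamma> * K)"
      using A[where n=n and i=s and j=s and a=a, OF B[where n=n]] dd_le_dbar[OF assms, of R R' "Suc n" s s] unfolding Vr_def Vd_def by linarith
  qed
qed

lemma star_ge_pi:
  assumes "stochastic P" "0 \<le> \<gamma>" "\<gamma> < 1"
  shows "V_pi P R \<gamma> \<pi> s \<le> V_star P R \<gamma> s"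
proof -
  define x where "x t = V_star P R \<gamma> t - V_pi P R \<gamma> \<pi> t" for t
  define m where "m = Min (range x)"
  have "m \<in> range x" unfolding m_def by (rule Min_in) auto
  then obtain s0 where s0: "m = x s0" by blast
  have mle: "m \<le> x t" for t unfolding m_def by simp
  define Sv where "Sv = (\<Sum>t\<in>UNIV. P s0 (\<pi> s0) t * V_star P R \<gamma> t)"
  define Sp where "Sp = (\<Sum>t\<in>UNIV. P s0 (\<pi> s0) t * V_pi P R \<gamma> \<pi> t)"
  have 1: "R s0 (\<pi> s0) + \<gamma> * Sv \<le> V_star P R \<gamma> s0"
    unfolding Sv_def by (subst (2) Vstar_eq[OF assms]) (rule Max_ge, auto)
  have 2: "V_pi P R \<gamma> \<pi> s0 = R s0 (\<pi> s0) + \<gamma> * Sp"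
    unfolding Sp_def by (rule Vpi_eq[OF assms])
  have mS: "m \<le> (\<Sum>t\<in>UNIV. P s0 (\<pi> s0) t * x t)" by (rule stoch_lower[OF assms(1) mle])
  have 3: "(\<Sum>t\<in>UNIV. P s0 (\<pi> s0) t * x t) = Sv - Sp"
    unfolding x_def Sv_def Sp_def by (simp add: right_diff_distrib sum_subtractf)
  have "\<gamma> * m \<le> \<gamma> * (Sv - Sp)" using mult_left_mono[OF mS assms(2)] 3 by simp
  then have "\<gamma> * m \<le> x s0" using 1 2 unfolding x_def by (simp add: right_diff_distrib)
  then have "\<gamma> * m \<le> m" using s0 by simp
  then have "0 \<le> (1 - \<gamma>) * m" by (simp add: left_diff_distrib)
  then have "0 \<le> m" using assms(3) by (simp add: zero_le_mult_iff)
  then show ?thesis using mle[of s] unfolding x_def by simp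
qed


lemma stoch_upper:
  assumes "stochastic P" "\<And>t. x t \<le> c"
  shows "(\<Sum>t\<in>UNIV. P s a t * x t) \<le> c"
proof -
  have "(\<Sum>t\<in>UNIV. P s a t * x t) \<le> (\<Sum>t\<in>UNIV. P s a t * c)"
    apply (rule sum_mono) using assms by (simp add: stochastic_def mult_left_mono)
  also have "\<dots> = c" using assms(1) by (simp add: stochastic_def sum_distrib_right[symmetric])
  finally show ?thesis .
qed

theorem lemma4:
  fixes P P' :: "'s::finite \<Rightarrow> 'a::finite \<Rightarrow> 's \<Rightarrow> real"
    and R R' :: "'s \<Rightarrow> 'a \<Rightarrow> real"
    and \<gamma> :: real
    and \<pi> :: "'s \<Rightarrow> 'a"
  assumes "0 < \<gamma>" and "\<gamma> < 1"
    and "stochastic P" and "stochastic P'"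
  shows "gap (V_star P R \<gamma>) (V_pi P R \<gamma> \<pi>)
    \<le> 2 / (1 - \<gamma>) * Max (range (\<lambda>s. d_bar P R P' R' \<gamma> s s))
      + (1 + \<gamma>) / (1 - \<gamma>) * gap (V_star P' R' \<gamma>) (V_pi P' R' \<gamma> \<pi>)"
proof -
  have g0: "0 \<le> \<gamma>" using assms(1) by simp
  note g1 = assms(2)
  define Vr where "Vr = V_star P R \<gamma>"
  define Vp where "Vp = V_pi P R \<gamma> \<pi>"
  define Wr where "Wr = V_star P' R' \<gamma>"
  define Wp where "Wp = V_pi P' R' \<gamma> \<pi>"
  define D where "D = Max (range (\<lambda>s. d_bar P R P' R' \<gamma> s s))"
  define G where "G = gap Wr Wp"
  define \<delta> where "\<delta> = gap Vr Vp"
  have Dge: "d_bar P R P' R' \<gamma> s s \<le> D" for s unfolding D_def by simp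
  have Gge: "Wr s - Wp s \<le> G" for s unfolding G_def gap_def by simp
  have dge: "Vr s - Vp s \<le> \<delta>" for s unfolding \<delta>_def gap_def by simp
  have WpWr: "Wp s \<le> Wr s" for s unfolding Wp_def Wr_def by (rule star_ge_pi[OF assms(4) g0 g1])
  have G0: "0 \<le> G" using Gge[of undefined] WpWr[of undefined] by linarith
  have main: "Vr s - Vp s \<le> 2 * D + G + \<gamma> * \<delta>" for s
  proof -
    define Qr where "Qr = R s (\<pi> s) + \<gamma> * (\<Sum>t\<in>UNIV. P s (\<pi> s) t * Vr t)"
    define Qd where "Qd = R' s (\<pi> s) + \<gamma> * (\<Sum>t\<in>UNIV. P' s (\<pi> s) t * Wr t)"
    have e1: "Vr s - Wr s \<le> D"
      using bisim(1)[OF assms(3,4) g0 g1, of R s R'] Dge[of s] unfolding Vr_def Wr_def by linarith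
    have e2: "Qd - Qr \<le> D"
      using bisim(2)[OF assms(3,4) g0 g1, of R s "\<pi> s" R'] Dge[of s] unfolding Qr_def Qd_def Vr_def Wr_def by linarith
    have "(\<Sum>t\<in>UNIV. P' s (\<pi> s) t * Wp t) \<le> (\<Sum>t\<in>UNIV. P' s (\<pi> s) t * Wr t)"
      apply (rule sum_mono) using assms(4) WpWr by (simp add: stochastic_def mult_left_mono)
    then have "Wp s \<le> Qd"
      unfolding Qd_def Wp_def using Vpi_eq[OF assms(4) g0 g1, of R' \<pi> s] mult_left_mono[OF _ g0]
      by (metis add_le_cancel_left Wr_def Wp_def)
    then have e3: "Wr s - Qd \<le> G" using Gge[of s] by linarith
    have "(\<Sum>t\<in>UNIV. P s (\<pi> s) t * (Vr t - Vp t)) \<le> \<delta>" by (rule stoch_upper[OF assms(3) dge])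
    moreover have "(\<Sum>t\<in>UNIV. P s (\<pi> s) t * (Vr t - Vp t)) = (\<Sum>t\<in>UNIV. P s (\<pi> s) t * Vr t) - (\<Sum>t\<in>UNIV. P s (\<pi> s) t * Vp t)"
      by (simp add: right_diff_distrib sum_subtractf)
    ultimately have "\<gamma> * ((\<Sum>t\<in>UNIV. P s (\<pi> s) t * Vr t) - (\<Sum>t\<in>UNIV. P s (\<pi> s) t * Vp t)) \<le> \<gamma> * \<delta>"
      using mult_left_mono[OF _ g0] by metis
    moreover have "Vp s = R s (\<pi> s) + \<gamma> * (\<Sum>t\<in>UNIV. P s (\<pi> s) t * Vp t)"
      unfolding Vp_def by (rule Vpi_eq[OF assms(3) g0 g1])
    ultimately have e4: "Qr - Vp s \<le> \<gamma> * \<delta>" unfolding Qr_def by (simp add: right_diff_distrib)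
    show ?thesis using e1 e2 e3 e4 by linarith
  qed
  have "\<delta> \<le> 2 * D + G + \<gamma> * \<delta>"
    using main unfolding \<delta>_def gap_def by (subst Max_le_iff) auto
  then have "\<delta> * (1 - \<gamma>) \<le> 2 * D + (1 + \<gamma>) * G" using G0 g0
    by (simp add: algebra_simps) (smt (verit) mult_nonneg_nonneg)
  then have "\<delta> \<le> (2 * D + (1 + \<gamma>) * G) / (1 - \<gamma>)" using g1 by (simp add: pos_le_divide_eq)
  also have "\<dots> = 2 * D / (1 - \<gamma>) + (1 + \<gamma>) * G / (1 - \<gamma>)" by (rule add_divide_distrib)
  also have "\<dots> = 2 / (1 - \<gamma>) * D + (1 + \<gamma>) / (1 - \<gamma>) * G" by simp
  finally show ?thesis unfolding \<delta>_def D_def G_def Vr_def Vp_def Wr_def Wp_def .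
qed

end
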